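(* Let $T\in B(\mathcal{F})$ be a $k$-raising or $k$-lowering operator for some $k\ge0$. If $[T,R_j^*]\in\mathcal{S}$ for $1\le j\le d$, then $T\in\mathcal{C}=C^*(L_1,\ldots,L_d)$.
   Context: $d\ge2$; $\xi_1,\ldots,\xi_d$ is the standard orthonormal basis of $\mathbb{C}^d$. $\mathcal{F}=\bigoplus_{n\ge0}\mathcal{F}_n$ is the full Fock space, $\mathcal{F}_0=\mathbb{C}\Omega$, $\mathcal{F}_n=(\mathbb{C}^d)^{\otimes n}$ with the usual inner product. $L_j\eta=\xi_j\otimes\eta$, $R_j\eta=\eta\otimes\xi_j$ (with $L_j\Omega=R_j\Omega=\xi_j$). $T$ is $k$-raising if $T(\mathcal{F}_n)\subseteq\mathcal{F}_{n+k}$ for all $n\ge0$; $k$-lowering if $T(\mathcal{F}_n)\subseteq\mathcal{F}_{n-k}$ for $n\ge k$ and $T(\mathcal{F}_n)=\{0\}$ for $n<k$. $\mathcal{S}$ is the set of operators $S\in B(\mathcal{F})$ which are band-limited (there is $b\ge0$ with $S(\mathcal{F}_n)\subseteq\bigoplus_{|m-n|\le b}\mathcal{F}_m$ for all $n$) and summable ($\sum_{n\ge0}\|S|_{\mathcal{F}_n}\|<\infty$). *)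

theory Defs
  imports "HOL-Analysis.Analysis"
begin

text \<open>Full Fock space over C^d: the word [i1,...,in] (letters in {1..d}) stands for
  xi_i1 (x) ... (x) xi_in, the empty word for Omega.\<close>

type_synonym fock_vec = "nat list \<Rightarrow> complex"
type_synonym fock_op = "fock_vec \<Rightarrow> fock_vec"

definition fock_words :: "nat \<Rightarrow> nat list set" where
  "fock_words d = {w. set w \<subseteq> {1..d}}"

definition ell2 :: "nat \<Rightarrow> fock_vec set" where
  "ell2 d = {x. (\<forall>w. w \<notin> fock_words d \<longrightarrow> x w = 0) \<and>
                 (\<lambda>w. (cmod (x w))\<^sup>2) summable_on UNIV}"

definition fnorm :: "fock_vec \<Rightarrow> real" where
  "fnorm x = sqrt (\<Sum>\<^sub>\<infinity>w. (cmod (x w))\<^sup>2)"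

text \<open>Bounded linear operators on the Fock space (only behaviour on ell2 d matters).\<close>
definition bounded_op :: "nat \<Rightarrow> fock_op \<Rightarrow> bool" where
  "bounded_op d T \<longleftrightarrow>
     (\<forall>x\<in>ell2 d. T x \<in> ell2 d) \<and>
     (\<forall>x\<in>ell2 d. \<forall>y\<in>ell2 d. T (\<lambda>w. x w + y w) = (\<lambda>w. T x w + T y w)) \<and>
     (\<forall>c. \<forall>x\<in>ell2 d. T (\<lambda>w. c * x w) = (\<lambda>w. c * T x w)) \<and>
     (\<exists>C. \<forall>x\<in>ell2 d. fnorm (T x) \<le> C * fnorm x)"

definition deg_space :: "nat \<Rightarrow> nat \<Rightarrow> fock_vec set" where
  "deg_space d n = {x \<in> ell2 d. \<forall>w. length w \<noteq> n \<longrightarrow> x w = 0}"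

definition opnorm_on :: "fock_vec set \<Rightarrow> fock_op \<Rightarrow> real" where
  "opnorm_on A T = Sup ((\<lambda>x. fnorm (T x)) ` {x \<in> A. fnorm x \<le> 1})"

definition opnorm :: "nat \<Rightarrow> fock_op \<Rightarrow> real" where
  "opnorm d T = opnorm_on (ell2 d) T"

definition raising :: "nat \<Rightarrow> nat \<Rightarrow> fock_op \<Rightarrow> bool" where
  "raising d k T \<longleftrightarrow> (\<forall>n. \<forall>x\<in>deg_space d n. T x \<in> deg_space d (n + k))"

definition lowering :: "nat \<Rightarrow> nat \<Rightarrow> fock_op \<Rightarrow> bool" where
  "lowering d k T \<longleftrightarrow> (\<forall>n. \<forall>x\<in>deg_space d n.
      (if k \<le> n then T x \<in> deg_space d (n - k) else T x = (\<lambda>_. 0)))"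

definition band_limited :: "nat \<Rightarrow> fock_op \<Rightarrow> bool" where
  "band_limited d S \<longleftrightarrow> (\<exists>b::nat. \<forall>n. \<forall>x\<in>deg_space d n. \<forall>w.
      S x w \<noteq> 0 \<longrightarrow> length w \<le> n + b \<and> n \<le> length w + b)"

definition class_S :: "nat \<Rightarrow> fock_op \<Rightarrow> bool" where
  "class_S d S \<longleftrightarrow> bounded_op d S \<and> band_limited d S \<and>
      summable (\<lambda>n. opnorm_on (deg_space d n) S)"

definition Lop :: "nat \<Rightarrow> fock_op" where
  "Lop j x = (\<lambda>w. case w of [] \<Rightarrow> 0 | a # v \<Rightarrow> (if a = j then x v else 0))"

definition Lstar :: "nat \<Rightarrow> fock_op" where
  "Lstar j x = (\<lambda>w. x (j # w))"

definition Rop :: "nat \<Rightarrow> fock_op" where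
  "Rop j x = (\<lambda>w. if w \<noteq> [] \<and> last w = j then x (butlast w) else 0)"

definition Rstar :: "nat \<Rightarrow> fock_op" where
  "Rstar j x = (\<lambda>w. x (w @ [j]))"

text \<open>Non-commutative *-polynomials in L_1..L_d (closed under adjoints since the
  generators include the L_j^*).\<close>
inductive_set star_poly :: "nat \<Rightarrow> fock_op set" for d :: nat where
  gen_L: "j \<in> {1..d} \<Longrightarrow> Lop j \<in> star_poly d"
| gen_Lstar: "j \<in> {1..d} \<Longrightarrow> Lstar j \<in> star_poly d"
| add: "P \<in> star_poly d \<Longrightarrow> Q \<in> star_poly d \<Longrightarrow> (\<lambda>x w. P x w + Q x w) \<in> star_poly d"
| mult: "P \<in> star_poly d \<Longrightarrow> Q \<in> star_poly d \<Longrightarrow> (\<lambda>x. P (Q x)) \<in> star_poly d"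
| smult: "P \<in> star_poly d \<Longrightarrow> (\<lambda>x w. c * P x w) \<in> star_poly d"

definition cuntz_toeplitz :: "nat \<Rightarrow> fock_op set" where
  "cuntz_toeplitz d = {T. bounded_op d T \<and>
      (\<forall>\<epsilon>>0. \<exists>P\<in>star_poly d. opnorm d (\<lambda>x w. T x w - P x w) < \<epsilon>)}"

end

theory Submission
  imports Defs
begin


definition Wd :: "nat \<Rightarrow> nat \<Rightarrow> nat list set" where
  "Wd d L = {w. length w = L \<and> set w \<subseteq> {1..d}}"

lemma finite_Wd: "finite (Wd d L)"
proof -
  have "Wd d L = {w. set w \<subseteq> {1..d} \<and> length w = L}" unfolding Wd_def by auto
  thus ?thesis using finite_lists_length_eq[of "{1..d}" L] by simp
qed

lemma Wd_fock: "w \<in> Wd d L \<Longrightarrow> w \<in> fock_words d"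
  unfolding Wd_def fock_words_def by auto

lemma fock_Wd: "w \<in> fock_words d \<Longrightarrow> w \<in> Wd d (length w)"
  unfolding Wd_def fock_words_def by auto

lemma LEN:
  fixes f :: "nat list \<Rightarrow> real"
  assumes van: "\<And>w. w \<notin> fock_words d \<Longrightarrow> f w = 0" and sm: "f summable_on UNIV"
  shows "(\<lambda>L. sum f (Wd d L)) sums infsum f UNIV"
proof -
  let ?S = "SIGMA L:(UNIV::nat set). Wd d L"
  have hs: "(f has_sum infsum f UNIV) UNIV" using sm by (simp add: has_sum_infsum)
  have eq: "snd ` ?S = fock_words d"
  proof
    show "snd ` ?S \<subseteq> fock_words d" using Wd_fock by auto
    show "fock_words d \<subseteq> snd ` ?S"
    proof
      fix w assume "w \<in> fock_words d"
      hence "(length w, w) \<in> ?S" using fock_Wd by auto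
      thus "w \<in> snd ` ?S" by force
    qed
  qed
  have "(f has_sum infsum f UNIV) (fock_words d)"
    using hs has_sum_cong_neutral[of "fock_words d" UNIV f f] van by auto
  hence "(f has_sum infsum f UNIV) (snd ` ?S)" using eq by simp
  moreover have "inj_on snd ?S" unfolding inj_on_def Wd_def by auto
  ultimately have "((f \<circ> snd) has_sum infsum f UNIV) ?S" using has_sum_reindex by blast
  hence "((\<lambda>L. sum f (Wd d L)) has_sum infsum f UNIV) UNIV"
    by (rule has_sum_SigmaD) (auto simp: finite_Wd)
  thus ?thesis by (rule has_sum_imp_sums)
qed

lemma LEN_summable:
  fixes f :: "nat list \<Rightarrow> real"
  assumes van: "\<And>w. w \<notin> fock_words d \<Longrightarrow> f w = 0" and nn: "\<And>w. f w \<ge> 0"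
    and sm: "summable (\<lambda>L. sum f (Wd d L))"
  shows "f summable_on UNIV"
proof (rule nonneg_bdd_above_summable_on)
  show "bdd_above (sum f ` {F. F \<subseteq> UNIV \<and> finite F})"
  proof (rule bdd_aboveI2)
    fix F :: "nat list set" assume "F \<in> {F. F \<subseteq> UNIV \<and> finite F}"
    hence fin: "finite F" by auto
    define N where "N = Suc (Max (length ` F))"
    have "sum f F = sum f (F \<inter> fock_words d)"
      using fin van by (intro sum.mono_neutral_right) auto
    also have "\<dots> \<le> sum f (\<Union>L<N. Wd d L)"
    proof (rule sum_mono2)
      show "finite (\<Union>L<N. Wd d L)" using finite_Wd by auto
      show "F \<inter> fock_words d \<subseteq> (\<Union>L<N. Wd d L)"
      proof
        fix w assume w: "w \<in> F \<inter> fock_words d"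
        hence "length w < N" unfolding N_def using fin by (simp add: le_imp_less_Suc)
        thus "w \<in> (\<Union>L<N. Wd d L)" using w fock_Wd by blast
      qed
    qed (use nn in auto)
    also have "\<dots> = (\<Sum>L<N. sum f (Wd d L))"
      by (rule sum.UNION_disjoint) (simp_all add: finite_Wd, auto simp: Wd_def)
    also have "\<dots> \<le> (\<Sum>L. sum f (Wd d L))"
      using sm nn by (intro sum_le_suminf) (auto intro: sum_nonneg)
    finally show "sum f F \<le> (\<Sum>L. sum f (Wd d L))" .
  qed
qed (use nn in auto)

definition sq :: "nat \<Rightarrow> fock_vec \<Rightarrow> nat \<Rightarrow> real" where
  "sq d x L = (\<Sum>w\<in>Wd d L. (cmod (x w))\<^sup>2)"

lemma sq_nonneg: "sq d x L \<ge> 0"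
  unfolding sq_def by (auto intro: sum_nonneg)

lemma fnorm_nonneg: "fnorm x \<ge> 0"
proof -
  have "0 \<le> (\<Sum>\<^sub>\<infinity>w. (cmod (x w))\<^sup>2)" by (rule infsum_nonneg) simp
  thus ?thesis unfolding fnorm_def by simp
qed

lemma fnorm_sq: "(fnorm x)\<^sup>2 = (\<Sum>\<^sub>\<infinity>w. (cmod (x w))\<^sup>2)"
proof -
  have "0 \<le> (\<Sum>\<^sub>\<infinity>w. (cmod (x w))\<^sup>2)" by (rule infsum_nonneg) simp
  thus ?thesis unfolding fnorm_def by simp
qed

lemma ell2_sums: "x \<in> ell2 d \<Longrightarrow> sq d x sums (fnorm x)\<^sup>2"
  unfolding fnorm_sq sq_def
  by (rule LEN) (auto simp: ell2_def)

lemma fnorm_finite: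
  assumes "finite A" "\<And>w. w \<notin> A \<Longrightarrow> x w = 0"
  shows "fnorm x = sqrt (\<Sum>w\<in>A. (cmod (x w))\<^sup>2)"
proof -
  have "(\<Sum>\<^sub>\<infinity>w. (cmod (x w))\<^sup>2) = (\<Sum>\<^sub>\<infinity>w\<in>A. (cmod (x w))\<^sup>2)"
    by (rule infsum_cong_neutral) (use assms in auto)
  thus ?thesis unfolding fnorm_def using assms by simp
qed

lemma fnorm_Wd:
  assumes "\<And>w. w \<notin> Wd d L \<Longrightarrow> x w = 0"
  shows "fnorm x = sqrt (sq d x L)"
  unfolding sq_def by (rule fnorm_finite) (use assms finite_Wd in auto)

lemma ell2_finite_sum_le:
  assumes "x \<in> ell2 d" "finite A"
  shows "(\<Sum>w\<in>A. (cmod (x w))\<^sup>2) \<le> (fnorm x)\<^sup>2"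
  unfolding fnorm_sq
  by (rule finite_sum_le_infsum) (use assms in \<open>auto simp: ell2_def\<close>)

lemma sq_le_fnorm: "x \<in> ell2 d \<Longrightarrow> sq d x L \<le> (fnorm x)\<^sup>2"
  unfolding sq_def by (rule ell2_finite_sum_le) (auto simp: finite_Wd)

lemma point_le_fnorm:
  assumes "x \<in> ell2 d" shows "cmod (x w) \<le> fnorm x"
proof -
  have "(cmod (x w))\<^sup>2 \<le> (fnorm x)\<^sup>2" using ell2_finite_sum_le[OF assms, of "{w}"] by simp
  thus ?thesis using fnorm_nonneg[of x] by (simp add: abs_le_square_iff)
qed

lemma ell2_finite:
  assumes "finite A" "A \<subseteq> fock_words d" "\<And>w. w \<notin> A \<Longrightarrow> x w = 0"
  shows "x \<in> ell2 d"
proof -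
  have "(\<lambda>w. (cmod (x w))\<^sup>2) summable_on A" using assms(1) by simp
  hence "(\<lambda>w. (cmod (x w))\<^sup>2) summable_on UNIV"
    by (rule summable_on_cong_neutral[THEN iffD1, rotated -1]) (use assms in auto)
  thus ?thesis using assms unfolding ell2_def by auto
qed

lemma ell2_Wd:
  assumes "\<And>w. w \<notin> Wd d L \<Longrightarrow> x w = 0" shows "x \<in> ell2 d"
  by (rule ell2_finite[of "Wd d L"]) (use assms finite_Wd Wd_fock in auto)

lemma deg_space_Wd:
  assumes "\<And>w. w \<notin> Wd d L \<Longrightarrow> x w = 0" shows "x \<in> deg_space d L"
  using ell2_Wd[OF assms] assms unfolding deg_space_def Wd_def by auto

lemma deg_space_van:
  assumes "x \<in> deg_space d L" "w \<notin> Wd d L" shows "x w = 0"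
  using assms unfolding deg_space_def ell2_def Wd_def fock_words_def by auto

lemma ell2_zero: "(\<lambda>w. 0) \<in> ell2 d"
  by (rule ell2_finite[of "{}"]) auto

lemma ell2_add:
  assumes "x \<in> ell2 d" "y \<in> ell2 d" shows "(\<lambda>w. x w + y w) \<in> ell2 d"
proof -
  have sx: "(\<lambda>w. (cmod (x w))\<^sup>2) summable_on UNIV" and sy: "(\<lambda>w. (cmod (y w))\<^sup>2) summable_on UNIV"
    using assms by (auto simp: ell2_def)
  have "(\<lambda>w. 2 * (cmod (x w))\<^sup>2 + 2 * (cmod (y w))\<^sup>2) summable_on UNIV"
    by (intro summable_on_add summable_on_cmult_right sx sy)
  moreover have "(cmod (x w + y w))\<^sup>2 \<le> 2 * (cmod (x w))\<^sup>2 + 2 * (cmod (y w))\<^sup>2" for w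
  proof -
    have "cmod (x w + y w) \<le> cmod (x w) + cmod (y w)" by (rule norm_triangle_ineq)
    hence "(cmod (x w + y w))\<^sup>2 \<le> (cmod (x w) + cmod (y w))\<^sup>2" by (simp add: power_mono)
    also have "\<dots> \<le> 2 * (cmod (x w))\<^sup>2 + 2 * (cmod (y w))\<^sup>2"
      by (smt (verit) sum_squares_ge_zero power2_sum zero_le_power2 power2_diff)
    finally show ?thesis .
  qed
  ultimately have "(\<lambda>w. (cmod (x w + y w))\<^sup>2) summable_on UNIV"
    by (rule summable_on_comparison_test) auto
  thus ?thesis using assms by (auto simp: ell2_def)
qed

lemma ell2_scale:
  assumes "x \<in> ell2 d" shows "(\<lambda>w. c * x w) \<in> ell2 d"
proof -
  have "(\<lambda>w. (cmod c)\<^sup>2 * (cmod (x w))\<^sup>2) summable_on UNIV"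
    using assms by (intro summable_on_cmult_right) (auto simp: ell2_def)
  thus ?thesis using assms by (auto simp: ell2_def norm_mult power_mult_distrib)
qed

lemma ell2_restrict:
  assumes "x \<in> ell2 d" shows "(\<lambda>w. if P w then x w else 0) \<in> ell2 d"
proof -
  have "(\<lambda>w. (cmod (if P w then x w else 0))\<^sup>2) summable_on UNIV"
    by (rule summable_on_comparison_test[of "\<lambda>w. (cmod (x w))\<^sup>2"]) (use assms in \<open>auto simp: ell2_def\<close>)
  thus ?thesis using assms by (auto simp: ell2_def)
qed

lemma ell2_diff:
  assumes "x \<in> ell2 d" "y \<in> ell2 d" shows "(\<lambda>w. x w - y w) \<in> ell2 d"
  using ell2_add[OF assms(1) ell2_scale[OF assms(2), of "-1"]] by simp

lemma fnorm_scale: "fnorm (\<lambda>w. c * x w) = cmod c * fnorm x"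
proof -
  have "(\<Sum>\<^sub>\<infinity>w. (cmod (c * x w))\<^sup>2) = (cmod c)\<^sup>2 * (\<Sum>\<^sub>\<infinity>w. (cmod (x w))\<^sup>2)"
  proof (cases "(\<lambda>w. (cmod (x w))\<^sup>2) summable_on UNIV")
    case True thus ?thesis by (simp add: norm_mult power_mult_distrib infsum_cmult_right)
  next
    case False
    note nsx = False
    show ?thesis
    proof (cases "c = 0")
      case False
      have "\<not> (\<lambda>w. (cmod c)\<^sup>2 * (cmod (x w))\<^sup>2) summable_on UNIV"
      proof
        assume "(\<lambda>w. (cmod c)\<^sup>2 * (cmod (x w))\<^sup>2) summable_on UNIV"
        hence "(\<lambda>w. inverse ((cmod c)\<^sup>2) * ((cmod c)\<^sup>2 * (cmod (x w))\<^sup>2)) summable_on UNIV"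
          by (rule summable_on_cmult_right)
        moreover have "(\<lambda>w. inverse ((cmod c)\<^sup>2) * ((cmod c)\<^sup>2 * (cmod (x w))\<^sup>2)) = (\<lambda>w. (cmod (x w))\<^sup>2)"
          using False by (simp add: field_simps)
        ultimately show False using nsx by simp
      qed
      thus ?thesis using nsx by (simp add: norm_mult power_mult_distrib infsum_not_exists)
    qed simp
  qed
  thus ?thesis unfolding fnorm_def by (simp add: real_sqrt_mult)
qed



lemma bounded_C:
  assumes "bounded_op d S"
  obtains C where "C \<ge> 0" "\<And>x. x \<in> ell2 d \<Longrightarrow> fnorm (S x) \<le> C * fnorm x"
proof -
  obtain C where C: "\<And>x. x \<in> ell2 d \<Longrightarrow> fnorm (S x) \<le> C * fnorm x"
    using assms unfolding bounded_op_def by blast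
  have "fnorm (S x) \<le> max C 0 * fnorm x" if "x \<in> ell2 d" for x
  proof -
    have "C * fnorm x \<le> max C 0 * fnorm x" using fnorm_nonneg[of x] by (intro mult_right_mono) auto
    thus ?thesis using C[OF that] by linarith
  qed
  thus ?thesis using that[of "max C 0"] by auto
qed

lemma opn_bdd:
  assumes "bounded_op d S" "A \<subseteq> ell2 d"
  shows "bdd_above ((\<lambda>x. fnorm (S x)) ` {x \<in> A. fnorm x \<le> 1})"
proof -
  obtain C where C: "C \<ge> 0" "\<And>x. x \<in> ell2 d \<Longrightarrow> fnorm (S x) \<le> C * fnorm x"
    using bounded_C[OF assms(1)] by blast
  show ?thesis
  proof (rule bdd_aboveI2)
    fix x assume "x \<in> {x \<in> A. fnorm x \<le> 1}"
    hence "x \<in> ell2 d" "fnorm x \<le> 1" using assms by auto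
    moreover have "C * fnorm x \<le> C * 1" using \<open>fnorm x \<le> 1\<close> C(1) by (intro mult_left_mono) auto
    ultimately show "fnorm (S x) \<le> C" using C(2) by force
  qed
qed

lemma opn_nonneg:
  assumes "bounded_op d S" shows "opnorm_on (deg_space d n) S \<ge> 0"
proof -
  have z: "(\<lambda>w. 0) \<in> deg_space d n" unfolding deg_space_def using ell2_zero by auto
  have f0: "fnorm (\<lambda>w::nat list. 0::complex) = 0" using fnorm_finite[of "{}" "\<lambda>w. 0"] by simp
  have "fnorm (S (\<lambda>w. 0)) \<le> opnorm_on (deg_space d n) S"
    unfolding opnorm_on_def
    by (rule cSup_upper) (use z f0 opn_bdd[OF assms, of "deg_space d n"] in \<open>auto simp: deg_space_def\<close>)
  thus ?thesis using fnorm_nonneg[of "S (\<lambda>w. 0)"] by linarith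
qed

lemma deg_space_scale: "y \<in> deg_space d n \<Longrightarrow> (\<lambda>w. c * y w) \<in> deg_space d n"
  unfolding deg_space_def using ell2_scale by auto

lemma opn:
  assumes bS: "bounded_op d S" and y: "y \<in> deg_space d n"
  shows "fnorm (S y) \<le> opnorm_on (deg_space d n) S * fnorm y"
proof -
  have yl: "y \<in> ell2 d" using y by (simp add: deg_space_def)
  obtain C where C: "C \<ge> 0" "\<And>x. x \<in> ell2 d \<Longrightarrow> fnorm (S x) \<le> C * fnorm x"
    using bounded_C[OF bS] by blast
  show ?thesis
  proof (cases "fnorm y = 0")
    case True
    hence "fnorm (S y) \<le> 0" using C(2)[OF yl] by simp
    thus ?thesis using True fnorm_nonneg[of "S y"] by simp
  next
    case False
    hence fp: "fnorm y > 0" using fnorm_nonneg[of y] by simp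
    define c where "c = complex_of_real (inverse (fnorm y))"
    define z where "z = (\<lambda>w. c * y w)"
    have zd: "z \<in> deg_space d n" unfolding z_def by (rule deg_space_scale[OF y])
    have "cmod c = inverse (fnorm y)" unfolding c_def using fp by (simp add: norm_inverse del: of_real_inverse add: of_real_inverse[symmetric])
    hence fz: "fnorm z = 1" unfolding z_def fnorm_scale using fp by simp
    have "S z = (\<lambda>w. c * S y w)" unfolding z_def using bS yl by (simp add: bounded_op_def)
    hence fSz: "fnorm (S z) = inverse (fnorm y) * fnorm (S y)"
      using fp \<open>cmod c = inverse (fnorm y)\<close> by (simp add: fnorm_scale)
    have "fnorm (S z) \<le> opnorm_on (deg_space d n) S"
      unfolding opnorm_on_def
      by (rule cSup_upper) (use zd fz opn_bdd[OF bS, of "deg_space d n"] in \<open>auto simp: deg_space_def\<close>)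
    hence "inverse (fnorm y) * fnorm (S y) \<le> opnorm_on (deg_space d n) S" using fSz by simp
    thus ?thesis using fp by (simp add: field_simps)
  qed
qed

definition tau :: "bool \<Rightarrow> nat \<Rightarrow> nat \<Rightarrow> nat" where
  "tau rs k n = (if rs then n + k else n - k)"

definition dl :: "nat list \<Rightarrow> fock_vec" where
  "dl u = (\<lambda>w. if w = u then 1 else 0)"

definition comp :: "nat \<Rightarrow> fock_vec \<Rightarrow> fock_vec" where
  "comp n x = (\<lambda>w. if length w = n then x w else 0)"

lemma dl_deg: "u \<in> Wd d n \<Longrightarrow> dl u \<in> deg_space d n"
  by (rule deg_space_Wd) (auto simp: dl_def)

lemma comp_deg: "x \<in> ell2 d \<Longrightarrow> comp n x \<in> deg_space d n"
  unfolding comp_def deg_space_def using ell2_restrict by auto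

lemma ell2_sum: "finite I \<Longrightarrow> (\<And>i. i \<in> I \<Longrightarrow> y i \<in> ell2 d) \<Longrightarrow> (\<lambda>w. \<Sum>i\<in>I. y i w) \<in> ell2 d"
proof (induction I rule: finite_induct)
  case empty thus ?case using ell2_zero by simp
next
  case (insert a I) thus ?case using ell2_add[of "y a" d "\<lambda>w. \<Sum>i\<in>I. y i w"] by simp
qed

locale fsetup =
  fixes d k :: nat and T :: fock_op and rs :: bool
  assumes d1: "1 \<le> d" and bT: "bounded_op d T"
  and grad: "\<And>n y w. y \<in> deg_space d n \<Longrightarrow> T y w \<noteq> 0 \<Longrightarrow> length w = tau rs k n \<and> (rs \<or> k \<le> n)"
begin

lemma T_ell2: "x \<in> ell2 d \<Longrightarrow> T x \<in> ell2 d"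
  using bT by (simp add: bounded_op_def)

lemma T_add: "x \<in> ell2 d \<Longrightarrow> y \<in> ell2 d \<Longrightarrow> T (\<lambda>w. x w + y w) = (\<lambda>w. T x w + T y w)"
  using bT by (simp add: bounded_op_def)

lemma T_scale: "x \<in> ell2 d \<Longrightarrow> T (\<lambda>w. c * x w) = (\<lambda>w. c * T x w)"
  using bT by (simp add: bounded_op_def)

lemma T_zero: "T (\<lambda>w. 0) = (\<lambda>w. 0)"
  using T_scale[OF ell2_zero, of 0] by simp

lemma T_sum: "finite I \<Longrightarrow> (\<And>i. i \<in> I \<Longrightarrow> y i \<in> ell2 d) \<Longrightarrow> T (\<lambda>w. \<Sum>i\<in>I. y i w) = (\<lambda>w. \<Sum>i\<in>I. T (y i) w)"
proof (induction I rule: finite_induct)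
  case empty thus ?case using T_zero by simp
next
  case (insert a I)
  have "T (\<lambda>w. \<Sum>i\<in>insert a I. y i w) = T (\<lambda>w. y a w + (\<Sum>i\<in>I. y i w))"
    using insert by simp
  also have "\<dots> = (\<lambda>w. T (y a) w + T (\<lambda>w. \<Sum>i\<in>I. y i w) w)"
    using insert ell2_sum[of I y d] by (intro T_add) auto
  finally show ?case using insert by simp
qed

lemma decomp:
  assumes "y \<in> deg_space d n" shows "y = (\<lambda>w. \<Sum>b\<in>Wd d n. y b * dl b w)"
proof
  fix w
  show "y w = (\<Sum>b\<in>Wd d n. y b * dl b w)"
  proof (cases "w \<in> Wd d n")
    case True
    hence "(\<Sum>b\<in>Wd d n. y b * dl b w) = y w"
      by (simp add: dl_def finite_Wd if_distrib cong: if_cong)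
    thus ?thesis by simp
  next
    case False
    thus ?thesis using deg_space_van[OF assms False] by (auto simp: dl_def intro!: sum.neutral)
  qed
qed

lemma T_deg:
  assumes "y \<in> deg_space d n" shows "T y w = (\<Sum>b\<in>Wd d n. y b * T (dl b) w)"
proof -
  have "T y = T (\<lambda>w. \<Sum>b\<in>Wd d n. y b * dl b w)" using decomp[OF assms] by simp
  also have "\<dots> = (\<lambda>w. \<Sum>b\<in>Wd d n. T (\<lambda>w. y b * dl b w) w)"
    by (rule T_sum) (auto simp: finite_Wd intro!: ell2_scale ell2_Wd[of _ n] dl_deg simp: dl_def)
  also have "\<dots> = (\<lambda>w. \<Sum>b\<in>Wd d n. y b * T (dl b) w)"
  proof (intro ext sum.cong refl)
    fix w b assume "b \<in> Wd d n"
    hence "dl b \<in> ell2 d" using dl_deg[of b d n] by (simp add: deg_space_def)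
    thus "T (\<lambda>w. y b * dl b w) w = y b * T (dl b) w" using T_scale by simp
  qed
  finally show ?thesis by simp
qed

lemma tail_fnorm:
  assumes z: "z \<in> ell2 d"
  shows "(\<lambda>N. fnorm (\<lambda>w. if N \<le> length w then z w else 0)) \<longlonglongrightarrow> 0"
proof -
  define s where "s = (fnorm z)\<^sup>2"
  have zs: "sq d z sums s" unfolding s_def by (rule ell2_sums[OF z])
  have eq: "(fnorm (\<lambda>w. if N \<le> length w then z w else 0))\<^sup>2 = s - (\<Sum>L<N. sq d z L)" for N
  proof -
    let ?t = "\<lambda>w. if N \<le> length w then z w else 0"
    have tl: "?t \<in> ell2 d" by (rule ell2_restrict[OF z])
    have sqt: "sq d ?t L = (if N \<le> L then sq d z L else 0)" for L
      unfolding sq_def Wd_def by (auto intro!: sum.cong sum.neutral)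
    have "(\<lambda>i. sq d z (i + N)) sums (s - (\<Sum>i<N. sq d z i))" by (rule sums_split_initial_segment[OF zs])
    hence "(\<lambda>i. sq d ?t (i + N)) sums (s - (\<Sum>i<N. sq d z i))" by (simp add: sqt)
    hence "sq d ?t sums (s - (\<Sum>i<N. sq d z i) + (\<Sum>i<N. sq d ?t i))" by (simp add: sums_iff_shift)
    moreover have "(\<Sum>i<N. sq d ?t i) = 0" by (simp add: sqt)
    ultimately have "sq d ?t sums (s - (\<Sum>i<N. sq d z i))" by simp
    thus ?thesis using ell2_sums[OF tl] sums_unique2 by blast
  qed
  have "(\<lambda>N. s - (\<Sum>L<N. sq d z L)) \<longlonglongrightarrow> s - s"
    using zs by (intro tendsto_intros) (simp add: sums_def)
  hence "(\<lambda>N. sqrt ((fnorm (\<lambda>w. if N \<le> length w then z w else 0))\<^sup>2)) \<longlonglongrightarrow> sqrt 0"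
    unfolding eq by (intro tendsto_intros) simp
  thus ?thesis using fnorm_nonneg by simp
qed

lemma cont:
  assumes x: "x \<in> ell2 d"
    and h: "\<And>j y. j \<noteq> n \<Longrightarrow> y \<in> deg_space d j \<Longrightarrow> T y w = 0"
  shows "T x w = T (comp n x) w"
proof -
  define z where "z = (\<lambda>w. x w - comp n x w)"
  have cl: "comp n x \<in> ell2 d" using comp_deg[OF x] by (simp add: deg_space_def)
  have zl: "z \<in> ell2 d" unfolding z_def by (rule ell2_diff[OF x cl])
  have "x = (\<lambda>w. comp n x w + z w)" unfolding z_def by simp
  hence "T x = (\<lambda>w. T (comp n x) w + T z w)" using T_add[OF cl zl] by simp
  moreover have "T z w = 0"
  proof -
    obtain C where C: "C \<ge> 0" "\<And>x. x \<in> ell2 d \<Longrightarrow> fnorm (T x) \<le> C * fnorm x"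
      using bounded_C[OF bT] by blast
    define tl where "tl N = (\<lambda>w. if N \<le> length w then z w else 0)" for N
    have tll: "tl N \<in> ell2 d" for N unfolding tl_def by (rule ell2_restrict[OF zl])
    have bnd: "cmod (T z w) \<le> C * fnorm (tl N)" for N
    proof -
      have zeq: "z = (\<lambda>w. (\<Sum>j<N. comp j z w) + tl N w)"
      proof
        fix v
        show "z v = (\<Sum>j<N. comp j z v) + tl N v"
        proof (cases "length v < N")
          case True
          have "(\<Sum>j<N. comp j z v) = z v"
            using True by (simp add: comp_def if_distrib cong: if_cong)
          thus ?thesis using True by (simp add: tl_def)
        next
          case False
          thus ?thesis by (auto simp: tl_def comp_def intro!: sum.neutral)
        qed
      qed
      have cjl: "comp j z \<in> ell2 d" for j using comp_deg[OF zl] by (simp add: deg_space_def)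
      have "T z = (\<lambda>w. T (\<lambda>w. \<Sum>j<N. comp j z w) w + T (tl N) w)"
        by (subst zeq, rule T_add) (auto intro!: ell2_sum cjl tll)
      moreover have "T (\<lambda>w. \<Sum>j<N. comp j z w) = (\<lambda>w. \<Sum>j<N. T (comp j z) w)"
        by (rule T_sum) (auto intro: cjl)
      moreover have "T (comp j z) w = 0" for j
      proof (cases "j = n")
        case True
        hence "comp j z = (\<lambda>w. 0)" unfolding z_def comp_def by auto
        thus ?thesis using T_zero by simp
      next
        case False thus ?thesis using h comp_deg[OF zl] by blast
      qed
      ultimately have "T z w = T (tl N) w" by simp
      hence "cmod (T z w) \<le> fnorm (T (tl N))" using point_le_fnorm[OF T_ell2[OF tll]] by simp
      also have "\<dots> \<le> C * fnorm (tl N)" by (rule C(2)[OF tll])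
      finally show ?thesis .
    qed
    have "(\<lambda>N. C * fnorm (tl N)) \<longlonglongrightarrow> C * 0"
      unfolding tl_def by (intro tendsto_intros tail_fnorm zl)
    hence "cmod (T z w) \<le> C * 0"
      by (rule LIMSEQ_le_const) (use bnd in auto)
    thus ?thesis by simp
  qed
  ultimately show ?thesis by simp
qed

end


definition pref :: "nat list \<Rightarrow> fock_op" where
  "pref a x = (\<lambda>w. if take (length a) w = a then x (drop (length a) w) else 0)"

definition sfx :: "nat list \<Rightarrow> fock_op" where
  "sfx b x = (\<lambda>w. x (b @ w))"

definition Qop :: "nat \<Rightarrow> fock_op" where
  "Qop d x = (\<lambda>w. x w - (\<Sum>j\<in>{1..d}. Lop j (Lstar j x) w))"

lemma sp_id: "1 \<le> d \<Longrightarrow> (\<lambda>x. x) \<in> star_poly d"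
proof -
  assume "1 \<le> d"
  hence "(\<lambda>x. Lstar 1 (Lop 1 x)) \<in> star_poly d"
    by (intro star_poly.mult[OF star_poly.gen_Lstar star_poly.gen_L]) auto
  moreover have "(\<lambda>x. Lstar 1 (Lop 1 x)) = (\<lambda>x. x)"
    by (auto simp: Lstar_def Lop_def)
  ultimately show ?thesis by simp
qed

lemma sp_zero: "1 \<le> d \<Longrightarrow> (\<lambda>x w. 0) \<in> star_poly d"
proof -
  assume "1 \<le> d"
  hence "(\<lambda>x w. 0 * Lop 1 x w) \<in> star_poly d"
    by (intro star_poly.smult star_poly.gen_L) auto
  thus ?thesis by simp
qed

lemma sp_sum: assumes d: "1 \<le> d" shows "finite I \<Longrightarrow> (\<And>i. i \<in> I \<Longrightarrow> P i \<in> star_poly d) \<Longrightarrow>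
  (\<lambda>x w. \<Sum>i\<in>I. P i x w) \<in> star_poly d"
proof (induction I rule: finite_induct)
  case empty thus ?case using sp_zero[OF d] by simp
next
  case (insert a I)
  have "(\<lambda>x w. P a x w + (\<lambda>x w. \<Sum>i\<in>I. P i x w) x w) \<in> star_poly d"
    using insert by (intro star_poly.add) auto
  thus ?case using insert by simp
qed

lemma sp_pref: "1 \<le> d \<Longrightarrow> set a \<subseteq> {1..d} \<Longrightarrow> pref a \<in> star_poly d"
proof (induction a)
  case Nil
  have "pref [] = (\<lambda>x. x)" by (auto simp: pref_def)
  thus ?case using sp_id Nil by simp
next
  case (Cons j a)
  have "(\<lambda>x. Lop j (pref a x)) \<in> star_poly d"
    using Cons by (intro star_poly.mult[OF star_poly.gen_L]) auto
  moreover have "(\<lambda>x. Lop j (pref a x)) = pref (j # a)"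
    by (auto simp: pref_def Lop_def fun_eq_iff split: list.split)
  ultimately show ?case by simp
qed

lemma sp_sfx: "1 \<le> d \<Longrightarrow> set b \<subseteq> {1..d} \<Longrightarrow> sfx b \<in> star_poly d"
proof (induction b)
  case Nil
  have "sfx [] = (\<lambda>x. x)" by (auto simp: sfx_def)
  thus ?case using sp_id Nil by simp
next
  case (Cons j b)
  have "(\<lambda>x. sfx b (Lstar j x)) \<in> star_poly d"
    using Cons by (intro star_poly.mult[OF _ star_poly.gen_Lstar]) auto
  moreover have "(\<lambda>x. sfx b (Lstar j x)) = sfx (j # b)"
    by (auto simp: sfx_def Lstar_def fun_eq_iff)
  ultimately show ?case by simp
qed

lemma sp_Qop: "1 \<le> d \<Longrightarrow> Qop d \<in> star_poly d"
proof -
  assume d: "1 \<le> d"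
  have "(\<lambda>x. Lop j (Lstar j x)) \<in> star_poly d" if "j \<in> {1..d}" for j
    by (rule star_poly.mult[OF star_poly.gen_L[OF that] star_poly.gen_Lstar[OF that]])
  hence "(\<lambda>x w. \<Sum>j\<in>{1..d}. (\<lambda>x. Lop j (Lstar j x)) x w) \<in> star_poly d"
    by (rule sp_sum[OF d, rotated]) auto
  hence "(\<lambda>x w. (-1) * (\<lambda>x w. \<Sum>j\<in>{1..d}. (\<lambda>x. Lop j (Lstar j x)) x w) x w) \<in> star_poly d"
    by (rule star_poly.smult)
  hence "(\<lambda>x w. (\<lambda>x. x) x w + (\<lambda>x w. (-1) * (\<lambda>x w. \<Sum>j\<in>{1..d}. (\<lambda>x. Lop j (Lstar j x)) x w) x w) x w) \<in> star_poly d"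
    by (rule star_poly.add[OF sp_id[OF d]])
  hence "(\<lambda>x w. x w + (-1) * (\<lambda>x w. \<Sum>j\<in>{1..d}. (\<lambda>x. Lop j (Lstar j x)) x w) x w) \<in> star_poly d"
    by simp
  moreover have "(\<lambda>x w. x w + (-1) * (\<lambda>x w. \<Sum>j\<in>{1..d}. (\<lambda>x. Lop j (Lstar j x)) x w) x w) = Qop d"
    by (auto simp: Qop_def fun_eq_iff)
  ultimately show ?thesis by simp
qed

lemma Qop_sfx:
  assumes x: "x \<in> ell2 d"
  shows "Qop d (sfx u x) r = (if r = [] then x u else 0)"
proof (cases r)
  case Nil thus ?thesis by (simp add: Qop_def Lop_def sfx_def)
next
  case (Cons c r')
  have s: "(\<Sum>j\<in>{1..d}. Lop j (Lstar j (sfx u x)) r) = (if c \<in> {1..d} then x (u @ r) else 0)"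
    using Cons by (simp add: Lop_def Lstar_def sfx_def if_distrib cong: if_cong)
  show ?thesis
  proof (cases "c \<in> {1..d}")
    case True thus ?thesis using Cons s by (simp add: Qop_def sfx_def)
  next
    case False
    hence "u @ r \<notin> fock_words d" using Cons by (auto simp: fock_words_def)
    hence "x (u @ r) = 0" using x by (auto simp: ell2_def)
    thus ?thesis using Cons s False by (simp add: Qop_def sfx_def)
  qed
qed

lemma pt_eq:
  assumes x: "x \<in> ell2 d"
  shows "pref v (Qop d (sfx u x)) w = (if w = v then x u else 0)"
proof -
  have "(take (length v) w = v \<and> drop (length v) w = []) \<longleftrightarrow> w = v"
    by (metis append_take_drop_id append_Nil2 drop_all nat_le_linear take_all)
  thus ?thesis unfolding pref_def Qop_sfx[OF x] by auto
qed

definition Ushort :: "nat \<Rightarrow> nat \<Rightarrow> nat list set" where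
  "Ushort d m = {u. length u < m \<and> set u \<subseteq> {1..d}}"

lemma finite_Ushort: "finite (Ushort d m)"
proof -
  have "Ushort d m \<subseteq> {xs. set xs \<subseteq> {1..d} \<and> length xs \<le> m}" unfolding Ushort_def by auto
  thus ?thesis using finite_lists_length_le[of "{1..d}" m] finite_subset by blast
qed

definition Pfun :: "nat \<Rightarrow> nat \<Rightarrow> nat \<Rightarrow> nat \<Rightarrow> (nat list \<Rightarrow> nat list \<Rightarrow> complex) \<Rightarrow> fock_op" where
  "Pfun d m V mm cc x w =
     (\<Sum>u\<in>Ushort d m. \<Sum>v\<in>Ushort d V. cc u v * (if w = v then x u else 0)) +
     (\<Sum>a\<in>Wd d mm. \<Sum>b\<in>Wd d m. cc b a * (if take mm w = a then x (b @ drop mm w) else 0))"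

lemma Pfun_star:
  assumes d: "1 \<le> d"
  shows "\<exists>P\<in>star_poly d. \<forall>x\<in>ell2 d. P x = Pfun d m V mm cc x"
proof -
  define P where "P = (\<lambda>x w. (\<lambda>x w. \<Sum>u\<in>Ushort d m. (\<lambda>x w. \<Sum>v\<in>Ushort d V. (\<lambda>x w. cc u v * pref v (Qop d (sfx u x)) w) x w) x w) x w
     + (\<lambda>x w. \<Sum>a\<in>Wd d mm. (\<lambda>x w. \<Sum>b\<in>Wd d m. (\<lambda>x w. cc b a * pref a (sfx b x) w) x w) x w) x w)"
  have A: "(\<lambda>x w. cc u v * pref v (Qop d (sfx u x)) w) \<in> star_poly d"
    if "u \<in> Ushort d m" "v \<in> Ushort d V" for u v
  proof -
    have us: "set u \<subseteq> {1..d}" and vs: "set v \<subseteq> {1..d}" using that by (auto simp: Ushort_def)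
    have "(\<lambda>x. Qop d (sfx u x)) \<in> star_poly d"
      by (rule star_poly.mult[OF sp_Qop[OF d] sp_sfx[OF d us]])
    hence "(\<lambda>x. pref v ((\<lambda>x. Qop d (sfx u x)) x)) \<in> star_poly d"
      by (rule star_poly.mult[OF sp_pref[OF d vs]])
    thus ?thesis by (rule star_poly.smult[where c = "cc u v", simplified])
  qed
  have B: "(\<lambda>x w. cc b a * pref a (sfx b x) w) \<in> star_poly d"
    if "a \<in> Wd d mm" "b \<in> Wd d m" for a b
  proof -
    have as: "set a \<subseteq> {1..d}" and bs: "set b \<subseteq> {1..d}" using that by (auto simp: Wd_def)
    have "(\<lambda>x. pref a (sfx b x)) \<in> star_poly d"
      by (rule star_poly.mult[OF sp_pref[OF d as] sp_sfx[OF d bs]])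
    thus ?thesis by (rule star_poly.smult[where c = "cc b a", simplified])
  qed
  have A2: "(\<lambda>x w. \<Sum>u\<in>Ushort d m. (\<lambda>x w. \<Sum>v\<in>Ushort d V. (\<lambda>x w. cc u v * pref v (Qop d (sfx u x)) w) x w) x w) \<in> star_poly d"
    by (rule sp_sum[OF d finite_Ushort], rule sp_sum[OF d finite_Ushort], rule A)
  have B2: "(\<lambda>x w. \<Sum>a\<in>Wd d mm. (\<lambda>x w. \<Sum>b\<in>Wd d m. (\<lambda>x w. cc b a * pref a (sfx b x) w) x w) x w) \<in> star_poly d"
    by (rule sp_sum[OF d finite_Wd], rule sp_sum[OF d finite_Wd], rule B)
  have "P \<in> star_poly d" unfolding P_def by (rule star_poly.add[OF A2 B2])
  moreover have "P x = Pfun d m V mm cc x" if x: "x \<in> ell2 d" for x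
  proof
    fix w
    have "pref a (sfx b x) w = (if take mm w = a then x (b @ drop mm w) else 0)" if "a \<in> Wd d mm" for a b
      using that by (auto simp: pref_def sfx_def Wd_def)
    thus "P x w = Pfun d m V mm cc x w"
      unfolding P_def Pfun_def pt_eq[OF x] by simp
  qed
  ultimately show ?thesis by blast
qed



definition Dop :: "fock_op \<Rightarrow> nat \<Rightarrow> fock_op" where
  "Dop T j x = (\<lambda>w. T (Rstar j x) w - Rstar j (T x) w)"

locale fsetup2 = fsetup +
  fixes m :: nat
  assumes mk: "k \<le> m"
  and Dbd: "\<And>j. j \<in> {1..d} \<Longrightarrow> bounded_op d (Dop T j)"
begin

abbreviation "mm \<equiv> tau rs k m"
definition cc :: "nat list \<Rightarrow> nat list \<Rightarrow> complex" where "cc u v = T (dl u) v"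
definition P :: fock_op where "P = Pfun d m (m + k + 1) mm cc"
definition Tp :: fock_op where
  "Tp x w = (\<Sum>a\<in>Wd d mm. \<Sum>b\<in>Wd d m. cc b a * (if take mm w = a then x (b @ drop mm w) else 0))"

lemma P_split: "P x w = (\<Sum>u\<in>Ushort d m. \<Sum>v\<in>Ushort d (m + k + 1). cc u v * (if w = v then x u else 0)) + Tp x w"
  unfolding P_def Pfun_def Tp_def by simp

lemma grad_dl:
  assumes "u \<in> fock_words d" "cc u w \<noteq> 0"
  shows "length w = tau rs k (length u) \<and> (rs \<or> k \<le> length u)"
  using grad[OF dl_deg[OF fock_Wd[OF assms(1)]]] assms(2) unfolding cc_def by blast

lemma cc_supp:
  assumes "u \<in> Ushort d m"
  shows "(\<Sum>v\<in>Ushort d (m + k + 1). cc u v * (if w = v then c else 0)) = cc u w * c"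
proof (cases "cc u w = 0")
  case True
  thus ?thesis by (auto intro!: sum.neutral)
next
  case False
  have uf: "u \<in> fock_words d" using assms by (auto simp: Ushort_def fock_words_def)
  have "length w = tau rs k (length u)" using grad_dl[OF uf False] by blast
  hence "length w < m + k + 1" using assms by (auto simp: tau_def Ushort_def)
  moreover have "w \<in> fock_words d"
  proof (rule ccontr)
    assume "w \<notin> fock_words d"
    moreover have "T (dl u) \<in> ell2 d"
      using T_ell2 dl_deg[OF fock_Wd[OF uf]] by (auto simp: deg_space_def)
    ultimately have "cc u w = 0" unfolding cc_def ell2_def by auto
    thus False using False by simp
  qed
  ultimately have "w \<in> Ushort d (m + k + 1)" by (auto simp: Ushort_def fock_words_def)
  thus ?thesis by (simp add: finite_Ushort if_distrib cong: if_cong)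
qed

lemma P_low:
  assumes y: "y \<in> deg_space d n" and nm: "n < m"
  shows "P y w = T y w"
proof -
  have "Tp y w = 0" unfolding Tp_def
  proof (intro sum.neutral ballI)
    fix a b assume "a \<in> Wd d mm" "b \<in> Wd d m"
    hence "b @ drop mm w \<notin> Wd d n" using nm by (auto simp: Wd_def)
    thus "cc b a * (if take mm w = a then y (b @ drop mm w) else 0) = 0" using deg_space_van[OF y] by simp
  qed
  moreover have "(\<Sum>u\<in>Ushort d m. \<Sum>v\<in>Ushort d (m + k + 1). cc u v * (if w = v then y u else 0))
      = (\<Sum>u\<in>Ushort d m. y u * cc u w)"
    by (rule sum.cong[OF refl], subst cc_supp) (simp_all add: mult.commute)
  moreover have "(\<Sum>u\<in>Ushort d m. y u * cc u w) = (\<Sum>u\<in>Wd d n. y u * cc u w)"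
  proof (rule sum.mono_neutral_right)
    show "Wd d n \<subseteq> Ushort d m" using nm by (auto simp: Wd_def Ushort_def)
    show "\<forall>i\<in>Ushort d m - Wd d n. y i * cc i w = 0" using deg_space_van[OF y] by auto
  qed (simp add: finite_Ushort)
  moreover have "T y w = (\<Sum>u\<in>Wd d n. y u * cc u w)" unfolding cc_def by (rule T_deg[OF y])
  ultimately show ?thesis unfolding P_split by simp
qed

lemma P_high:
  assumes y: "y \<in> deg_space d n" and nm: "m \<le> n"
  shows "P y w = Tp y w"
proof -
  have "(\<Sum>u\<in>Ushort d m. \<Sum>v\<in>Ushort d (m + k + 1). cc u v * (if w = v then y u else 0)) = 0"
  proof (intro sum.neutral ballI)
    fix u v assume "u \<in> Ushort d m"
    hence "u \<notin> Wd d n" using nm by (auto simp: Wd_def Ushort_def)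
    thus "cc u v * (if w = v then y u else 0) = 0" using deg_space_van[OF y] by simp
  qed
  thus ?thesis unfolding P_split by simp
qed

lemma Tp_m:
  assumes y: "y \<in> deg_space d m"
  shows "Tp y w = T y w"
proof (cases "w \<in> Wd d mm")
  case True
  have "Tp y w = (\<Sum>a\<in>Wd d mm. if w = a then (\<Sum>b\<in>Wd d m. cc b a * y b) else 0)"
    unfolding Tp_def using True by (intro sum.cong refl) (auto simp: Wd_def intro!: sum.neutral)
  also have "\<dots> = (\<Sum>b\<in>Wd d m. cc b w * y b)" using True by (simp add: finite_Wd)
  also have "\<dots> = T y w" unfolding T_deg[OF y] cc_def by (simp add: mult.commute)
  finally show ?thesis .
next
  case False
  have "T y w = 0"
  proof (rule ccontr)
    assume "T y w \<noteq> 0"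
    hence "length w = mm" using grad[OF y] by blast
    moreover have "w \<in> fock_words d"
      using \<open>T y w \<noteq> 0\<close> T_ell2[of y] y by (auto simp: deg_space_def ell2_def)
    ultimately show False using False fock_Wd by fastforce
  qed
  moreover have "Tp y w = 0" unfolding Tp_def
  proof (intro sum.neutral ballI)
    fix a b assume a: "a \<in> Wd d mm" and b: "b \<in> Wd d m"
    show "cc b a * (if take mm w = a then y (b @ drop mm w) else 0) = 0"
    proof (cases "take mm w = a")
      case True
      have "drop mm w \<noteq> []"
      proof
        assume "drop mm w = []"
        hence "w = a" using True by (metis append_Nil2 append_take_drop_id)
        thus False using a False by simp
      qed
      hence "b @ drop mm w \<notin> Wd d m" using b by (auto simp: Wd_def)
      thus ?thesis using deg_space_van[OF y] by simp
    qed simp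
  qed
  ultimately show ?thesis by simp
qed

lemma Rstar_deg:
  assumes y: "y \<in> deg_space d (Suc l)" and i: "i \<in> {1..d}"
  shows "Rstar i y \<in> deg_space d l"
proof (rule deg_space_Wd)
  fix w assume "w \<notin> Wd d l"
  hence "w @ [i] \<notin> Wd d (Suc l)" using i by (auto simp: Wd_def)
  thus "Rstar i y w = 0" using deg_space_van[OF y] by (simp add: Rstar_def)
qed

lemma tau_Suc: "m \<le> l \<Longrightarrow> tau rs k (Suc l) = Suc (tau rs k l)"
  using mk by (auto simp: tau_def)

lemma Tp_step:
  assumes y: "y \<in> deg_space d (Suc l)" and ml: "m \<le> l"
  shows "Tp y (w @ [i]) = Tp (Rstar i y) w"
  unfolding Tp_def
proof (intro sum.cong refl)
  fix a b assume a: "a \<in> Wd d mm" and b: "b \<in> Wd d m"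
  show "cc b a * (if take mm (w @ [i]) = a then y (b @ drop mm (w @ [i])) else 0) =
        cc b a * (if take mm w = a then Rstar i y (b @ drop mm w) else 0)"
  proof (cases "mm \<le> length w")
    case True
    thus ?thesis by (simp add: Rstar_def)
  next
    case False
    hence "take mm w \<noteq> a" using a by (auto simp: Wd_def)
    moreover have "drop mm (w @ [i]) = []" using False by simp
    moreover have "b \<notin> Wd d (Suc l)" using b ml by (auto simp: Wd_def)
    moreover have "length a = mm" using a by (simp add: Wd_def)
    ultimately show ?thesis using deg_space_van[OF y, of b] by auto
  qed
qed

definition G :: fock_op where "G x w = T x w - P x w"

lemma G_low: "y \<in> deg_space d n \<Longrightarrow> n < m \<Longrightarrow> G y w = 0"
  unfolding G_def using P_low by simp

lemma G_m: "y \<in> deg_space d m \<Longrightarrow> G y w = 0"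
  unfolding G_def using P_high Tp_m by simp

lemma G_step:
  assumes y: "y \<in> deg_space d (Suc l)" and ml: "m \<le> l" and i: "i \<in> {1..d}"
  shows "G y (w @ [i]) = G (Rstar i y) w - Dop T i y w"
proof -
  have "P y (w @ [i]) = P (Rstar i y) w"
    using P_high[OF y] P_high[OF Rstar_deg[OF y i]] ml Tp_step[OF y ml] by simp
  thus ?thesis unfolding G_def Dop_def by (simp add: Rstar_def)
qed

lemma sq_split: "sq d f (Suc L) = (\<Sum>i\<in>{1..d}. sq d (\<lambda>w. f (w @ [i])) L)"
proof -
  let ?h = "\<lambda>(i::nat, w::nat list). w @ [i]"
  have inj: "inj_on ?h ({1..d} \<times> Wd d L)" by (auto simp: inj_on_def)
  have img: "?h ` ({1..d} \<times> Wd d L) = Wd d (Suc L)"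
  proof
    show "?h ` ({1..d} \<times> Wd d L) \<subseteq> Wd d (Suc L)" by (auto simp: Wd_def)
    show "Wd d (Suc L) \<subseteq> ?h ` ({1..d} \<times> Wd d L)"
    proof
      fix v assume v: "v \<in> Wd d (Suc L)"
      hence "v \<noteq> []" by (auto simp: Wd_def)
      hence "v = butlast v @ [last v]" by simp
      moreover have "(last v, butlast v) \<in> {1..d} \<times> Wd d L"
      proof -
        have "last v \<in> {1..d}" using last_in_set[OF \<open>v \<noteq> []\<close>] v unfolding Wd_def by blast
        thus ?thesis using v by (auto simp: Wd_def dest: in_set_butlastD)
      qed
      ultimately show "v \<in> ?h ` ({1..d} \<times> Wd d L)" by (metis (no_types, lifting) case_prod_conv image_eqI)
    qed
  qed
  have "sq d f (Suc L) = (\<Sum>p\<in>{1..d} \<times> Wd d L. (cmod (f (?h p)))\<^sup>2)"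
    unfolding sq_def img[symmetric] sum.reindex[OF inj] by (simp add: case_prod_beta o_def)
  also have "\<dots> = (\<Sum>i\<in>{1..d}. \<Sum>w\<in>Wd d L. (cmod (f (w @ [i])))\<^sup>2)"
    by (subst sum.cartesian_product) (auto intro!: sum.cong split: prod.split)
  finally show ?thesis unfolding sq_def .
qed

definition dlt :: "nat \<Rightarrow> real" where
  "dlt n = (\<Sum>j\<in>{1..d}. opnorm_on (deg_space d n) (Dop T j))"

definition ee :: "nat \<Rightarrow> real" where
  "ee n = (\<Sum>l\<in>{m<..n}. dlt l)"

lemma dlt_nonneg: "dlt n \<ge> 0"
  unfolding dlt_def using opn_nonneg Dbd by (auto intro: sum_nonneg)

lemma ee_nonneg: "ee n \<ge> 0"
  unfolding ee_def using dlt_nonneg by (auto intro: sum_nonneg)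

lemma L2_cart:
  fixes g :: "nat \<Rightarrow> nat list \<Rightarrow> real"
  shows "sqrt (\<Sum>i\<in>I. \<Sum>w\<in>B. (g i w)\<^sup>2) = L2_set (\<lambda>p. g (fst p) (snd p)) (I \<times> B)"
  unfolding L2_set_def by (subst sum.cartesian_product) (simp add: case_prod_beta)

lemma ee_Suc: "m \<le> n \<Longrightarrow> ee (Suc n) = ee n + dlt (Suc n)"
proof -
  assume "m \<le> n"
  hence "{m<..Suc n} = insert (Suc n) {m<..n}" by auto
  thus ?thesis unfolding ee_def by simp
qed

lemma fnorm_deg: "y \<in> deg_space d n \<Longrightarrow> fnorm y = sqrt (sq d y n)"
  by (rule fnorm_Wd) (rule deg_space_van)

lemma claim:
  assumes "m \<le> n"
  shows "y \<in> deg_space d n \<Longrightarrow> sqrt (sq d (G y) (tau rs k n)) \<le> ee n * sqrt (sq d y n)"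
  using assms
proof (induction n arbitrary: y rule: dec_induct)
  case base
  have "sq d (G y) (tau rs k m) = 0" unfolding sq_def using G_m[OF base] by simp
  thus ?case using ee_nonneg[of m] sq_nonneg[of d y m] by simp
next
  case (step n)
  note y = step.prems
  define ta where "ta = tau rs k n"
  define S where "S = sqrt (sq d y (Suc n))"
  have S0: "S \<ge> 0" unfolding S_def using sq_nonneg by simp
  define yi where "yi i = Rstar i y" for i
  define Di where "Di i = Dop T i y" for i
  define nrm where "nrm i = opnorm_on (deg_space d (Suc n)) (Dop T i)" for i
  let ?A = "{1..d} \<times> Wd d ta"
  have yid: "yi i \<in> deg_space d n" if "i \<in> {1..d}" for i
    unfolding yi_def by (rule Rstar_deg[OF y that])
  have "sq d (G y) (tau rs k (Suc n)) = (\<Sum>i\<in>{1..d}. sq d (\<lambda>w. G y (w @ [i])) ta)"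
    unfolding tau_Suc[OF step.hyps(1)] ta_def by (rule sq_split)
  also have "\<dots> = (\<Sum>i\<in>{1..d}. \<Sum>w\<in>Wd d ta. (cmod (G (yi i) w - Di i w))\<^sup>2)"
    unfolding sq_def yi_def Di_def using G_step[OF y step.hyps(1)] by simp
  finally have "sqrt (sq d (G y) (tau rs k (Suc n))) = L2_set (\<lambda>p. cmod (G (yi (fst p)) (snd p) - Di (fst p) (snd p))) ?A"
    using L2_cart[of "\<lambda>i w. cmod (G (yi i) w - Di i w)"] by simp
  also have "\<dots> \<le> L2_set (\<lambda>p. cmod (G (yi (fst p)) (snd p)) + cmod (Di (fst p) (snd p))) ?A"
    by (rule L2_set_mono) (auto simp: norm_triangle_ineq4)
  also have "\<dots> \<le> L2_set (\<lambda>p. cmod (G (yi (fst p)) (snd p))) ?A + L2_set (\<lambda>p. cmod (Di (fst p) (snd p))) ?A"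
    by (rule L2_set_triangle_ineq)
  also have "L2_set (\<lambda>p. cmod (G (yi (fst p)) (snd p))) ?A \<le> ee n * S"
  proof -
    have "L2_set (\<lambda>p. cmod (G (yi (fst p)) (snd p))) ?A = sqrt (\<Sum>i\<in>{1..d}. sq d (G (yi i)) ta)"
      unfolding sq_def using L2_cart[of "\<lambda>i w. cmod (G (yi i) w)"] by simp
    also have "\<dots> \<le> sqrt (\<Sum>i\<in>{1..d}. (ee n)\<^sup>2 * sq d (yi i) n)"
    proof (rule real_sqrt_le_mono, rule sum_mono)
      fix i assume i: "i \<in> {1..d}"
      have "sqrt (sq d (G (yi i)) ta) \<le> ee n * sqrt (sq d (yi i) n)"
        unfolding ta_def by (rule step.IH[OF yid[OF i]])
      hence "(sqrt (sq d (G (yi i)) ta))\<^sup>2 \<le> (ee n * sqrt (sq d (yi i) n))\<^sup>2"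
        by (rule power_mono) (simp add: sq_nonneg)
      thus "sq d (G (yi i)) ta \<le> (ee n)\<^sup>2 * sq d (yi i) n"
        using sq_nonneg[of d "G (yi i)" ta] sq_nonneg[of d "yi i" n] by (simp add: power_mult_distrib)
    qed
    also have "(\<Sum>i\<in>{1..d}. (ee n)\<^sup>2 * sq d (yi i) n) = (ee n)\<^sup>2 * sq d y (Suc n)"
      unfolding sq_split[of y n] sum_distrib_left yi_def by (simp add: Rstar_def)
    also have "sqrt \<dots> = ee n * S"
      unfolding S_def using ee_nonneg[of n] by (simp add: real_sqrt_mult)
    finally show ?thesis .
  qed
  also have "L2_set (\<lambda>p. cmod (Di (fst p) (snd p))) ?A \<le> dlt (Suc n) * S"
  proof -
    have "L2_set (\<lambda>p. cmod (Di (fst p) (snd p))) ?A = sqrt (\<Sum>i\<in>{1..d}. sq d (Di i) ta)"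
      unfolding sq_def using L2_cart[of "\<lambda>i w. cmod (Di i w)"] by simp
    also have "\<dots> \<le> sqrt (\<Sum>i\<in>{1..d}. (nrm i * S)\<^sup>2)"
    proof (rule real_sqrt_le_mono, rule sum_mono)
      fix i assume i: "i \<in> {1..d}"
      have yl: "y \<in> ell2 d" using y by (simp add: deg_space_def)
      have "Di i \<in> ell2 d" unfolding Di_def using Dbd[OF i] yl by (simp add: bounded_op_def)
      hence "sq d (Di i) ta \<le> (fnorm (Di i))\<^sup>2" by (rule sq_le_fnorm)
      also have "fnorm (Di i) \<le> nrm i * S"
        unfolding Di_def nrm_def S_def fnorm_deg[OF y, symmetric] by (rule opn[OF Dbd[OF i] y])
      hence "(fnorm (Di i))\<^sup>2 \<le> (nrm i * S)\<^sup>2" by (rule power_mono[OF _ fnorm_nonneg])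
      finally show "sq d (Di i) ta \<le> (nrm i * S)\<^sup>2" .
    qed
    also have "\<dots> = L2_set (\<lambda>i. nrm i * S) {1..d}" unfolding L2_set_def ..
    also have "\<dots> \<le> (\<Sum>i\<in>{1..d}. nrm i * S)"
      by (rule L2_set_le_sum) (use S0 opn_nonneg Dbd in \<open>auto simp: nrm_def\<close>)
    also have "\<dots> = dlt (Suc n) * S" unfolding dlt_def nrm_def by (simp add: sum_distrib_right)
    finally show ?thesis .
  qed
  finally show ?case unfolding S_def ee_Suc[OF step.hyps(1)] by (simp add: algebra_simps)
qed

definition srcn :: "nat \<Rightarrow> nat" where "srcn L = (if rs then L - k else L + k)"

lemma tau_srcn: "(rs \<longrightarrow> k \<le> L) \<Longrightarrow> tau rs k (srcn L) = L"
  by (auto simp: tau_def srcn_def)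

lemma T_loc:
  assumes x: "x \<in> ell2 d" and w: "rs \<longrightarrow> k \<le> length w"
  shows "T x w = T (comp (srcn (length w)) x) w"
proof (rule cont[OF x])
  fix j y assume j: "j \<noteq> srcn (length w)" and y: "y \<in> deg_space d j"
  show "T y w = 0"
  proof (rule ccontr)
    assume "T y w \<noteq> 0"
    hence "length w = tau rs k j \<and> (rs \<or> k \<le> j)" using grad[OF y] by blast
    thus False using j w unfolding tau_def srcn_def by (cases rs) auto
  qed
qed

lemma T_loc0:
  assumes x: "x \<in> ell2 d" and w: "rs" "length w < k"
  shows "T x w = 0"
proof -
  have h: "T y w = 0" if y: "y \<in> deg_space d j" for j y
  proof (rule ccontr)
    assume "T y w \<noteq> 0"
    hence "length w = tau rs k j" using grad[OF y] by blast
    thus False using w by (auto simp: tau_def)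
  qed
  have "T x w = T (comp 0 x) w" by (rule cont[OF x h])
  thus ?thesis using h[OF comp_deg[OF x]] by simp
qed

lemma P_loc:
  assumes w: "rs \<longrightarrow> k \<le> length w"
  shows "P x w = P (comp (srcn (length w)) x) w"
proof -
  let ?n = "srcn (length w)"
  have 1: "cc u v * (if w = v then x u else 0) = cc u v * (if w = v then comp ?n x u else 0)"
    if u: "u \<in> Ushort d m" for u v
  proof (cases "w = v \<and> cc u v \<noteq> 0")
    case True
    have uf: "u \<in> fock_words d" using u by (auto simp: Ushort_def fock_words_def)
    have "length w = tau rs k (length u) \<and> (rs \<or> k \<le> length u)" using grad_dl[OF uf] True by blast
    hence "length u = ?n" using w by (auto simp: tau_def srcn_def)
    thus ?thesis by (simp add: comp_def)
  qed auto
  have 2: "cc b a * (if take mm w = a then x (b @ drop mm w) else 0) =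
           cc b a * (if take mm w = a then comp ?n x (b @ drop mm w) else 0)"
    if a: "a \<in> Wd d mm" and b: "b \<in> Wd d m" for a b
  proof (cases "take mm w = a")
    case True
    hence "length w \<ge> mm" using a by (auto simp: Wd_def)
    hence "length (b @ drop mm w) = ?n" using b mk by (auto simp: Wd_def srcn_def tau_def)
    thus ?thesis by (simp add: comp_def)
  qed simp
  show ?thesis unfolding P_split Tp_def by (simp only: 1 2 cong: sum.cong)
qed

lemma P_loc0:
  assumes w: "rs" "length w < k"
  shows "P x w = 0"
proof -
  have "(\<Sum>u\<in>Ushort d m. \<Sum>v\<in>Ushort d (m + k + 1). cc u v * (if w = v then x u else 0)) = 0"
  proof (intro sum.neutral ballI)
    fix u v assume u: "u \<in> Ushort d m"
    show "cc u v * (if w = v then x u else 0) = 0"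
    proof (rule ccontr)
      assume "cc u v * (if w = v then x u else 0) \<noteq> 0"
      hence "w = v" "cc u v \<noteq> 0" by (auto split: if_splits)
      have uf: "u \<in> fock_words d" using u by (auto simp: Ushort_def fock_words_def)
      have "length w = tau rs k (length u)" using grad_dl[OF uf] \<open>w = v\<close> \<open>cc u v \<noteq> 0\<close> by blast
      thus False using w by (auto simp: tau_def)
    qed
  qed
  moreover have "Tp x w = 0" unfolding Tp_def
  proof (intro sum.neutral ballI)
    fix a b assume a: "a \<in> Wd d mm"
    have "take mm w \<noteq> a" using a w by (auto simp: Wd_def tau_def)
    thus "cc b a * (if take mm w = a then x (b @ drop mm w) else 0) = 0" by simp
  qed
  ultimately show ?thesis unfolding P_split by simp
qed

lemma G_loc:
  assumes "x \<in> ell2 d" "rs \<longrightarrow> k \<le> length w"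
  shows "G x w = G (comp (srcn (length w)) x) w"
  unfolding G_def using T_loc[OF assms] P_loc[OF assms(2)] by simp

lemma G_loc0:
  assumes "x \<in> ell2 d" "rs" "length w < k"
  shows "G x w = 0"
  unfolding G_def using T_loc0[OF assms] P_loc0[OF assms(2,3)] by simp

lemma G_van:
  assumes x: "x \<in> ell2 d" and w: "w \<notin> fock_words d"
  shows "G x w = 0"
proof -
  have "T x w = 0" using T_ell2[OF x] w by (auto simp: ell2_def)
  moreover have "(\<Sum>u\<in>Ushort d m. \<Sum>v\<in>Ushort d (m + k + 1). cc u v * (if w = v then x u else 0)) = 0"
    using w by (intro sum.neutral ballI) (auto simp: Ushort_def fock_words_def)
  moreover have "Tp x w = 0" unfolding Tp_def
  proof (intro sum.neutral ballI)
    fix a b assume a: "a \<in> Wd d mm" and b: "b \<in> Wd d m"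
    show "cc b a * (if take mm w = a then x (b @ drop mm w) else 0) = 0"
    proof (cases "take mm w = a")
      case True
      have "set w \<subseteq> set a \<union> set (drop mm w)" by (metis append_take_drop_id set_append True subset_refl)
      hence "\<not> set (drop mm w) \<subseteq> {1..d}" using w a by (auto simp: fock_words_def Wd_def)
      hence "b @ drop mm w \<notin> fock_words d" by (auto simp: fock_words_def)
      hence "x (b @ drop mm w) = 0" using x by (auto simp: ell2_def)
      thus ?thesis by simp
    qed simp
  qed
  ultimately show ?thesis unfolding G_def P_split by simp
qed

lemma G_deg_bound:
  assumes c: "c \<ge> 0" "\<And>n. ee n \<le> c" and y: "y \<in> deg_space d n"
  shows "sq d (G y) (tau rs k n) \<le> c\<^sup>2 * sq d y n"
proof (cases "n < m")
  case True
  have "sq d (G y) (tau rs k n) = 0" unfolding sq_def using G_low[OF y True] by simp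
  thus ?thesis using sq_nonneg[of d y n] by simp
next
  case False
  hence "sqrt (sq d (G y) (tau rs k n)) \<le> ee n * sqrt (sq d y n)" using claim y by simp
  also have "\<dots> \<le> c * sqrt (sq d y n)" using c sq_nonneg[of d y n] by (intro mult_right_mono) auto
  finally have "(sqrt (sq d (G y) (tau rs k n)))\<^sup>2 \<le> (c * sqrt (sq d y n))\<^sup>2"
    by (rule power_mono) (simp add: sq_nonneg)
  thus ?thesis using sq_nonneg[of d y n] sq_nonneg[of d "G y"] by (simp add: power_mult_distrib)
qed

lemma G_bound:
  assumes c: "c \<ge> 0" "\<And>n. ee n \<le> c" and x: "x \<in> ell2 d"
  shows "fnorm (G x) \<le> c * fnorm x"
proof -
  define h where "h L = (if rs then (if k \<le> L then sq d x (L - k) else 0) else sq d x (L + k))" for L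
  have xs: "sq d x sums (fnorm x)\<^sup>2" by (rule ell2_sums[OF x])
  have hs: "summable h \<and> suminf h \<le> (fnorm x)\<^sup>2"
  proof (cases rs)
    case True
    have "(\<lambda>i. h (i + k)) = sq d x" using True by (auto simp: h_def)
    hence "(\<lambda>i. h (i + k)) sums (fnorm x)\<^sup>2" using xs by simp
    hence "h sums ((fnorm x)\<^sup>2 + (\<Sum>i<k. h i))" by (simp add: sums_iff_shift)
    moreover have "(\<Sum>i<k. h i) = 0" using True by (simp add: h_def)
    ultimately show ?thesis by (simp add: sums_iff)
  next
    case False
    have "(\<lambda>i. sq d x (i + k)) sums ((fnorm x)\<^sup>2 - (\<Sum>i<k. sq d x i))"
      by (rule sums_split_initial_segment[OF xs])
    moreover have "(\<Sum>i<k. sq d x i) \<ge> 0" using sq_nonneg by (auto intro: sum_nonneg)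
    moreover have "h = (\<lambda>i. sq d x (i + k))" using False by (auto simp: h_def)
    ultimately show ?thesis by (auto simp: sums_iff)
  qed
  have hn: "h L \<ge> 0" for L unfolding h_def using sq_nonneg by auto
  have bnd: "sq d (G x) L \<le> c\<^sup>2 * h L" for L
  proof (cases "rs \<and> L < k")
    case True
    have "sq d (G x) L = 0" unfolding sq_def
      using G_loc0[OF x] True by (auto simp: Wd_def intro!: sum.neutral)
    thus ?thesis using hn[of L] by simp
  next
    case False
    hence L: "rs \<longrightarrow> k \<le> L" by auto
    define n where "n = srcn L"
    have tn: "tau rs k n = L" unfolding n_def by (rule tau_srcn[OF L])
    have "sq d (G x) L = sq d (G (comp n x)) L"
      unfolding sq_def n_def using G_loc[OF x] L by (auto simp: Wd_def intro!: sum.cong)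
    also have "\<dots> \<le> c\<^sup>2 * sq d (comp n x) n"
      using G_deg_bound[OF c comp_deg[OF x], of n] tn by simp
    also have "sq d (comp n x) n = sq d x n" unfolding sq_def comp_def by (auto simp: Wd_def intro!: sum.cong)
    also have "sq d x n = h L" unfolding h_def n_def srcn_def using L by auto
    finally show ?thesis .
  qed
  have sG: "summable (sq d (G x))"
    by (rule summable_comparison_test[of _ "\<lambda>L. c\<^sup>2 * h L"]) (use bnd sq_nonneg hs in \<open>auto intro: summable_mult\<close>)
  let ?f = "\<lambda>w. (cmod (G x w))\<^sup>2"
  have fv: "?f w = 0" if "w \<notin> fock_words d" for w using G_van[OF x that] by simp
  have fsum: "?f summable_on UNIV"
  proof (rule LEN_summable[of d])
    have "(\<lambda>L. sum ?f (Wd d L)) = sq d (G x)" by (simp add: sq_def fun_eq_iff)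
    thus "summable (\<lambda>L. sum ?f (Wd d L))" using sG by simp
  qed (use fv in auto)
  have "(\<lambda>L. sum ?f (Wd d L)) sums infsum ?f UNIV" by (rule LEN[OF fv fsum])
  hence "sq d (G x) sums (fnorm (G x))\<^sup>2" unfolding sq_def fnorm_sq by simp
  hence "(fnorm (G x))\<^sup>2 = suminf (sq d (G x))" by (simp add: sums_iff)
  also have "\<dots> \<le> suminf (\<lambda>L. c\<^sup>2 * h L)"
    by (rule suminf_le) (use bnd sG hs in \<open>auto intro: summable_mult\<close>)
  also have "\<dots> = c\<^sup>2 * suminf h" using hs by (simp add: suminf_mult)
  also have "\<dots> \<le> c\<^sup>2 * (fnorm x)\<^sup>2" using hs by (intro mult_left_mono) auto
  also have "\<dots> = (c * fnorm x)\<^sup>2" by (simp add: power_mult_distrib)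
  finally show ?thesis
    by (rule power2_le_imp_le) (use c fnorm_nonneg in auto)
qed

lemma G_opnorm:
  assumes c: "c \<ge> 0" "\<And>n. ee n \<le> c"
  shows "opnorm d G \<le> c"
  unfolding opnorm_def opnorm_on_def
proof (rule cSup_least)
  have f0: "fnorm (\<lambda>w::nat list. 0::complex) = 0" using fnorm_finite[of "{}" "\<lambda>w. 0"] by simp
  have "(\<lambda>w. 0) \<in> {x \<in> ell2 d. fnorm x \<le> 1}" using ell2_zero[of d] f0 by simp
  thus "(\<lambda>x. fnorm (G x)) ` {x \<in> ell2 d. fnorm x \<le> 1} \<noteq> {}" by blast
next
  fix r assume "r \<in> (\<lambda>x. fnorm (G x)) ` {x \<in> ell2 d. fnorm x \<le> 1}"
  then obtain x where x: "x \<in> ell2 d" "fnorm x \<le> 1" and r: "r = fnorm (G x)" by auto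
  have "r \<le> c * fnorm x" using G_bound[OF c x(1)] r by simp
  also have "\<dots> \<le> c * 1" using c x by (intro mult_left_mono) auto
  finally show "r \<le> c" by simp
qed

lemma approx:
  assumes sm: "summable (\<lambda>n. \<Sum>j\<in>{1..d}. opnorm_on (deg_space d n) (Dop T j))"
  shows "\<exists>Q\<in>star_poly d. opnorm d (\<lambda>x w. T x w - Q x w)
           \<le> (\<Sum>i. \<Sum>j\<in>{1..d}. opnorm_on (deg_space d (i + Suc m)) (Dop T j))"
proof -
  define c where "c = (\<Sum>i. dlt (i + Suc m))"
  have sm': "summable dlt" using sm by (simp add: dlt_def[abs_def])
  have sms: "summable (\<lambda>i. dlt (i + Suc m))" using summable_iff_shift[of dlt "Suc m"] sm' by simp
  have c0: "c \<ge> 0" unfolding c_def by (rule suminf_nonneg[OF sms dlt_nonneg])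
  have ce: "ee n \<le> c" for n
  proof (cases "n \<le> m")
    case True
    hence "ee n = 0" unfolding ee_def by simp
    thus ?thesis using c0 by simp
  next
    case False
    have "{m<..n} = (\<lambda>i. i + Suc m) ` {..<n - m}"
    proof
      show "{m<..n} \<subseteq> (\<lambda>i. i + Suc m) ` {..<n - m}"
      proof
        fix l assume "l \<in> {m<..n}"
        hence "l = (l - Suc m) + Suc m" "l - Suc m < n - m" by auto
        thus "l \<in> (\<lambda>i. i + Suc m) ` {..<n - m}" by blast
      qed
    qed auto
    hence "ee n = (\<Sum>i<n - m. dlt (i + Suc m))"
      unfolding ee_def by (simp add: sum.reindex inj_on_def)
    also have "\<dots> \<le> c" unfolding c_def by (rule sum_le_suminf[OF sms]) (auto simp: dlt_nonneg)
    finally show ?thesis .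
  qed
  obtain Q where Q: "Q \<in> star_poly d" "\<And>x. x \<in> ell2 d \<Longrightarrow> Q x = Pfun d m (m + k + 1) mm cc x"
    using Pfun_star[OF d1] by blast
  have "opnorm d (\<lambda>x w. T x w - Q x w) = opnorm d G"
    unfolding opnorm_def opnorm_on_def
  proof (rule arg_cong[where f = Sup], rule image_cong[OF refl])
    fix x assume "x \<in> {x \<in> ell2 d. fnorm x \<le> 1}"
    hence "Q x = P x" using Q(2) by (simp add: P_def)
    thus "fnorm (\<lambda>w. T x w - Q x w) = fnorm (G x)" by (simp add: G_def[abs_def])
  qed
  also have "\<dots> \<le> c" by (rule G_opnorm[OF c0 ce])
  finally show ?thesis using Q(1) unfolding c_def dlt_def by blast
qed

end


theorem proposition3p7:
  fixes d k :: nat and T :: fock_op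
  assumes "d \<ge> 2"
    and "bounded_op d T"
    and "raising d k T \<or> lowering d k T"
    and "\<forall>j\<in>{1..d}. class_S d (\<lambda>x w. T (Rstar j x) w - Rstar j (T x) w)"
  shows "T \<in> cuntz_toeplitz d"
proof -
  define rs where "rs = raising d k T"
  have grad: "length w = tau rs k n \<and> (rs \<or> k \<le> n)"
    if y: "y \<in> deg_space d n" and nz: "T y w \<noteq> 0" for n y w
  proof (cases rs)
    case True
    hence "T y \<in> deg_space d (n + k)" using y unfolding rs_def raising_def by auto
    thus ?thesis using nz True by (auto simp: deg_space_def tau_def)
  next
    case False
    hence low: "lowering d k T" using assms(3) rs_def by auto
    show ?thesis
    proof (cases "k \<le> n")
      case True
      hence "T y \<in> deg_space d (n - k)" using low y unfolding lowering_def by auto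
      thus ?thesis using nz True False by (auto simp: deg_space_def tau_def)
    next
      case False
      hence "T y = (\<lambda>_. 0)" using low y unfolding lowering_def by auto
      thus ?thesis using nz by simp
    qed
  qed
  interpret fsetup d k T rs
    by unfold_locales (use grad assms(1,2) in auto)
  have Deq: "Dop T j = (\<lambda>x w. T (Rstar j x) w - Rstar j (T x) w)" for j
    by (rule ext) (simp add: Dop_def)
  have Dbd: "bounded_op d (Dop T j)" and Dsum: "summable (\<lambda>n. opnorm_on (deg_space d n) (Dop T j))"
    if "j \<in> {1..d}" for j
    using assms(4) that unfolding Deq class_S_def by auto
  have sm: "summable (\<lambda>n. \<Sum>j\<in>{1..d}. opnorm_on (deg_space d n) (Dop T j))"
    by (rule summable_sum) (rule Dsum)
  show ?thesis unfolding cuntz_toeplitz_def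
  proof (intro CollectI conjI allI impI)
    show "bounded_op d T" by (rule assms(2))
    fix \<epsilon> :: real assume e: "\<epsilon> > 0"
    obtain N where N: "\<forall>n\<ge>N. norm (\<Sum>i. \<Sum>j\<in>{1..d}. opnorm_on (deg_space d (i + n)) (Dop T j)) < \<epsilon>"
      using suminf_exist_split[OF e sm] by blast
    define m where "m = max k N"
    interpret fsetup2 d k T rs m
      by unfold_locales (auto simp: m_def Dbd)
    obtain Q where Q: "Q \<in> star_poly d"
      "opnorm d (\<lambda>x w. T x w - Q x w) \<le> (\<Sum>i. \<Sum>j\<in>{1..d}. opnorm_on (deg_space d (i + Suc m)) (Dop T j))"
      using approx[OF sm] by blast
    have "norm (\<Sum>i. \<Sum>j\<in>{1..d}. opnorm_on (deg_space d (i + Suc m)) (Dop T j)) < \<epsilon>"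
      using N[rule_format, of "Suc m"] m_def by auto
    hence "opnorm d (\<lambda>x w. T x w - Q x w) < \<epsilon>" using Q(2) by (simp add: abs_less_iff)
    thus "\<exists>P\<in>star_poly d. opnorm d (\<lambda>x w. T x w - P x w) < \<epsilon>" using Q(1) by blast
  qed
qed


end
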